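(* Let $a<b$ be real numbers, $\mathbb{I}=[a,b]$, and let $M\ge 1$ and $N\ge 1$ be integers. Let $f:(\mathbb{I}^M)^N\to\mathbb{R}$ be a continuous set function with respect to the Hausdorff distance $d_H$. Then for every $\epsilon>0$ there exist a positive integer $K$, Gaussian kernels $\phi_1,\dots,\phi_K$ (i.e. vectors $\boldsymbol{\mu}_1,\dots,\boldsymbol{\mu}_K\in\mathbb{R}^M$ and positive semi-definite matrices $\boldsymbol{\Sigma}_1,\dots,\boldsymbol{\Sigma}_K\in\mathbb{R}^{M\times M}$), and a function $\gamma:\mathbb{R}^K\to\mathbb{R}$ such that for every $\mathcal{X}=(\boldsymbol{x}_1,\dots,\boldsymbol{x}_N)\in(\mathbb{I}^M)^N$, $$\Bigl|f(\mathcal{X})-\gamma\Bigl(\mathrm{MAX}\bigl(\{\phi_k(\boldsymbol{x}_i)\}_{k=1}^K\bigr)\Bigr)\Bigr|<\epsilon .$$ In particular, $g=\gamma\circ\mathrm{MAX}$ is a symmetric function of $(\boldsymbol{x}_1,\dots,\boldsymbol{x}_N)$, i.e. invariant under permutations of the points.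
   Context: A Gaussian kernel with mean $\boldsymbol{\mu}_k\in\mathbb{R}^M$ and positive semi-definite "inverse covariance" matrix $\boldsymbol{\Sigma}_k\in\mathbb{R}^{M\times M}$ is the function $\phi_k:\mathbb{R}^M\to(0,1]$, $\phi_k(\boldsymbol{x})=\exp\!\bigl(-(\boldsymbol{x}-\boldsymbol{\mu}_k)^\top\boldsymbol{\Sigma}_k(\boldsymbol{x}-\boldsymbol{\mu}_k)\bigr)$. For points $\boldsymbol{x}_1,\dots,\boldsymbol{x}_N$, $\mathrm{MAX}(\{\phi_k(\boldsymbol{x}_i)\}_{k=1}^K)\in\mathbb{R}^K$ denotes the vector whose $k$-th coordinate is $\max_{1\le i\le N}\phi_k(\boldsymbol{x}_i)$. An $N$-tuple $\mathcal{X}=(\boldsymbol{x}_1,\dots,\boldsymbol{x}_N)$ is identified with the finite set $\{\boldsymbol{x}_1,\dots,\boldsymbol{x}_N\}\subset\mathbb{R}^M$, and $d_H(\mathcal{X},\mathcal{X}')=\max\bigl(\sup_{x\in\mathcal{X}}\inf_{x'\in\mathcal{X}'}\|x-x'\|,\ \sup_{x'\in\mathcal{X}'}\inf_{x\in\mathcal{X}}\|x-x'\|\bigr)$ is the Hausdorff distance between these sets (Euclidean norm). A function $f$ on tuples of points is a continuous set function w.r.t. $d_H$ if for every $\mathcal{X}$ and every $\epsilon>0$ there is $\delta>0$ such that $d_H(\mathcal{X},\mathcal{X}')<\delta$ implies $|f(\mathcal{X})-f(\mathcal{X}')|<\epsilon$. *)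

theory Defs
  imports "HOL-Analysis.Analysis"
begin

text \<open>Hausdorff distance between (finite, nonempty) subsets of a metric space, as in the paper.\<close>
definition hausdorff_dist :: "'a::metric_space set \<Rightarrow> 'a set \<Rightarrow> real" where
  "hausdorff_dist A B =
     max (SUP x\<in>A. INF y\<in>B. dist x y) (SUP y\<in>B. INF x\<in>A. dist x y)"

definition psd :: "real^'m^'m \<Rightarrow> bool" where
  "psd S \<longleftrightarrow> transpose S = S \<and> (\<forall>v. 0 \<le> v \<bullet> (S *v v))"

text \<open>Gaussian kernel with mean mu and inverse covariance S.\<close>
definition gauss_kernel :: "real^'m \<Rightarrow> real^'m^'m \<Rightarrow> real^'m \<Rightarrow> real" where
  "gauss_kernel mu S x = exp (- ((x - mu) \<bullet> (S *v (x - mu))))"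

definition in_cube_tuple :: "real \<Rightarrow> real \<Rightarrow> ('n \<Rightarrow> real^'m) \<Rightarrow> bool" where
  "in_cube_tuple a b X \<longleftrightarrow> (\<forall>i j. X i $ j \<in> {a..b})"

definition hausdorff_continuous ::
  "real \<Rightarrow> real \<Rightarrow> (('n::finite \<Rightarrow> real^'m) \<Rightarrow> real) \<Rightarrow> bool" where
  "hausdorff_continuous a b f \<longleftrightarrow>
     (\<forall>X. in_cube_tuple a b X \<longrightarrow> (\<forall>e>0. \<exists>d>0. \<forall>X'. in_cube_tuple a b X' \<longrightarrow>
        hausdorff_dist (range X) (range X') < d \<longrightarrow> \<bar>f X - f X'\<bar> < e))"

end

theory Submission
  imports Defs
begin

lemma hd_lt:
  fixes A B :: "'a::metric_space set"
  assumes "finite A" "A \<noteq> {}" "finite B" "B \<noteq> {}"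
  shows "hausdorff_dist A B < r \<longleftrightarrow> (\<forall>x\<in>A. \<exists>y\<in>B. dist x y < r) \<and> (\<forall>y\<in>B. \<exists>x\<in>A. dist x y < r)"
proof -
  have i1: "(INF y\<in>B. dist x y) = Min ((\<lambda>y. dist x y) ` B)" for x
    using assms by (simp add: cInf_eq_Min)
  have i2: "(INF x\<in>A. dist x y) = Min ((\<lambda>x. dist x y) ` A)" for y
    using assms by (simp add: cInf_eq_Min)
  have s1: "(SUP x\<in>A. INF y\<in>B. dist x y) = Max ((\<lambda>x. INF y\<in>B. dist x y) ` A)"
    using assms by (simp add: cSup_eq_Max)
  have s2: "(SUP y\<in>B. INF x\<in>A. dist x y) = Max ((\<lambda>y. INF x\<in>A. dist x y) ` B)"
    using assms by (simp add: cSup_eq_Max)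
  show ?thesis unfolding hausdorff_dist_def s1 s2 unfolding i1 i2 using assms
    by (simp add: Max_less_iff Min_less_iff)
qed

lemma hd_self:
  fixes A :: "'a::metric_space set"
  assumes "r > 0" "finite A" "A \<noteq> {}"
  shows "hausdorff_dist A A < r"
proof -
  have "\<forall>x\<in>A. \<exists>y\<in>A. dist x y < r" using assms by (metis dist_self)
  moreover have "\<forall>y\<in>A. \<exists>x\<in>A. dist x y < r" using assms by (metis dist_self)
  ultimately show ?thesis using hd_lt[OF assms(2,3,2,3)] by blast
qed

lemma hd_sym: "hausdorff_dist A B = hausdorff_dist B A"
  unfolding hausdorff_dist_def by (simp add: dist_commute max.commute)

lemma gk1: "gauss_kernel g (mat 1) x = exp (- ((dist x g)^2))"
  unfolding gauss_kernel_def by (simp add: dist_norm power2_norm_eq_inner)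

lemma gk_gt: "\<eta> > 0 \<Longrightarrow> gauss_kernel g (mat 1) x > exp (- (\<eta>^2)) \<longleftrightarrow> dist x g < \<eta>"
proof -
  assume e: "\<eta> > 0"
  have "exp (- ((dist x g)^2)) > exp (- (\<eta>^2)) \<longleftrightarrow> (dist x g)^2 < \<eta>^2" by simp
  also have "\<dots> \<longleftrightarrow> dist x g < \<eta>" using e by (meson abs_of_nonneg zero_le_dist power2_less_imp_less less_imp_le power_strict_mono zero_less_numeral)
  finally show ?thesis unfolding gk1 .
qed

lemma psd1: "psd (mat 1)"
  unfolding psd_def by (simp add: transpose_mat)

lemma max_gt: "(Max (range (h::'n::finite \<Rightarrow> real)) > c) \<longleftrightarrow> (\<exists>i. h i > c)"
  by (simp add: Max_gr_iff)

lemma hd_tri: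
  fixes A B C :: "'a::metric_space set"
  assumes "finite A" "A \<noteq> {}" "finite B" "B \<noteq> {}" "finite C" "C \<noteq> {}"
    and "hausdorff_dist A B < r" "hausdorff_dist B C < s"
  shows "hausdorff_dist A C < r + s"
proof -
  have 1: "\<forall>x\<in>A. \<exists>y\<in>B. dist x y < r" "\<forall>y\<in>B. \<exists>x\<in>A. dist x y < r"
    using assms hd_lt[of A B r] by auto
  have 2: "\<forall>x\<in>B. \<exists>y\<in>C. dist x y < s" "\<forall>y\<in>C. \<exists>x\<in>B. dist x y < s"
    using assms hd_lt[of B C s] by auto
  have "\<forall>x\<in>A. \<exists>z\<in>C. dist x z < r + s"
  proof
    fix x assume "x \<in> A"
    then obtain y where "y \<in> B" "dist x y < r" using 1 by blast
    then obtain z where "z \<in> C" "dist y z < s" using 2 by blast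
    then show "\<exists>z\<in>C. dist x z < r + s" using \<open>dist x y < r\<close> dist_triangle[of x z y] by force
  qed
  moreover have "\<forall>z\<in>C. \<exists>x\<in>A. dist x z < r + s"
  proof
    fix z assume "z \<in> C"
    then obtain y where "y \<in> B" "dist y z < s" using 2 by blast
    then obtain x where "x \<in> A" "dist x y < r" using 1 by blast
    then show "\<exists>x\<in>A. dist x z < r + s" using \<open>dist y z < s\<close> dist_triangle[of x z y] by force
  qed
  ultimately show ?thesis using assms hd_lt[of A C "r+s"] by auto
qed

lemma hd_norm:
  fixes w w' :: "'a::euclidean_space^'n::finite"
  assumes "norm (w - w') < r"
  shows "hausdorff_dist (range (\<lambda>i. w$i)) (range (\<lambda>i. w'$i)) < r"
proof -
  have d: "dist (w$i) (w'$i) < r" for i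
    using Finite_Cartesian_Product.norm_nth_le[of "w - w'" i] assms by (simp add: dist_norm)
  show ?thesis by (subst hd_lt) (auto intro: d)
qed

lemma unif:
  fixes f :: "('n::finite \<Rightarrow> real^'m) \<Rightarrow> real"
  assumes hc: "hausdorff_continuous a b f" and e: "e > 0"
  shows "\<exists>\<delta>>0. \<forall>X X'. in_cube_tuple a b X \<longrightarrow> in_cube_tuple a b X' \<longrightarrow>
     hausdorff_dist (range X) (range X') < \<delta> \<longrightarrow> \<bar>f X - f X'\<bar> < e"
proof -
  define C where "C = {v::(real^'m)^'n. \<forall>i j. v$i$j \<in> {a..b}}"
  define tup where "tup = (\<lambda>v::(real^'m)^'n. \<lambda>i. v$i)"
  have cube: "in_cube_tuple a b (tup v)" if "v \<in> C" for v
    using that unfolding C_def tup_def in_cube_tuple_def by auto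
  have cC: "compact C"
  proof (unfold compact_eq_bounded_closed, intro conjI)
    have "norm v \<le> (\<Sum>i\<in>(UNIV::'n set). \<Sum>j\<in>(UNIV::'m set). \<bar>a\<bar> + \<bar>b\<bar>)" if "v \<in> C" for v
    proof -
      have "norm v \<le> (\<Sum>i\<in>UNIV. norm (v$i))" unfolding norm_vec_def by (rule L2_set_le_sum) auto
      also have "\<dots> \<le> (\<Sum>i\<in>UNIV. \<Sum>j\<in>UNIV. \<bar>v$i$j\<bar>)"
        by (rule sum_mono) (metis norm_le_l1_cart real_norm_def)
      also have "\<dots> \<le> (\<Sum>i\<in>(UNIV::'n set). \<Sum>j\<in>(UNIV::'m set). \<bar>a\<bar> + \<bar>b\<bar>)"
        proof (rule sum_mono, rule sum_mono)
        fix i j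
        have "v$i$j \<in> {a..b}" using that unfolding C_def by blast
        then show "\<bar>v$i$j\<bar> \<le> \<bar>a\<bar> + \<bar>b\<bar>" by auto
      qed
      finally show ?thesis .
    qed
    then show "bounded C" unfolding bounded_iff by blast
    have "C = (\<Inter>i. \<Inter>j. {v. a \<le> v$i$j} \<inter> {v. v$i$j \<le> b})" unfolding C_def by auto
    also have "closed \<dots>"
      by (intro closed_INT ballI closed_Int closed_Collect_le continuous_on_const continuous_intros)
    finally show "closed C" .
  qed
  have "\<forall>v\<in>C. \<exists>d>0. \<forall>X'. in_cube_tuple a b X' \<longrightarrow>
      hausdorff_dist (range (tup v)) (range X') < d \<longrightarrow> \<bar>f (tup v) - f X'\<bar> < e/2"
  proof
    fix v assume "v \<in> C"
    have "e/2 > 0" using e by simp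
    then show "\<exists>d>0. \<forall>X'. in_cube_tuple a b X' \<longrightarrow>
      hausdorff_dist (range (tup v)) (range X') < d \<longrightarrow> \<bar>f (tup v) - f X'\<bar> < e/2"
      using hc cube[OF \<open>v \<in> C\<close>] unfolding hausdorff_continuous_def by blast
  qed
  then obtain d where dpos: "\<And>v. v \<in> C \<Longrightarrow> d v > 0" and
    dprop: "\<And>v X'. v \<in> C \<Longrightarrow> in_cube_tuple a b X' \<Longrightarrow>
      hausdorff_dist (range (tup v)) (range X') < d v \<Longrightarrow> \<bar>f (tup v) - f X'\<bar> < e/2"
    by metis
  define H where "H v = {w. hausdorff_dist (range (tup w)) (range (tup v)) < d v / 2}" for v
  have fin: "finite (range (h::'n \<Rightarrow> 'z))" "range h \<noteq> {}" for h by auto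
  have opH: "open (H v)" for v
  proof (unfold open_dist, intro ballI)
    fix w assume "w \<in> H v"
    then have t: "hausdorff_dist (range (tup w)) (range (tup v)) < d v / 2" unfolding H_def by simp
    define t where "t = (hausdorff_dist (range (tup w)) (range (tup v)) + d v / 2) / 2"
    have tt: "hausdorff_dist (range (tup w)) (range (tup v)) < t" "t < d v / 2" using t t_def by auto
    show "\<exists>r>0. \<forall>y. dist y w < r \<longrightarrow> y \<in> H v"
    proof (intro exI[of _ "d v / 2 - t"] conjI allI impI)
      show "0 < d v / 2 - t" using tt by simp
      fix y assume "dist y w < d v / 2 - t"
      then have "hausdorff_dist (range (tup y)) (range (tup w)) < d v / 2 - t"
        unfolding tup_def dist_norm by (rule hd_norm)
      then have "hausdorff_dist (range (tup y)) (range (tup v)) < (d v / 2 - t) + t"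
        using hd_tri[OF fin fin fin] tt by blast
      then show "y \<in> H v" unfolding H_def by simp
    qed
  qed
  have cov: "C \<subseteq> (\<Union>v\<in>C. H v)"
  proof
    fix v assume v: "v \<in> C"
    have "hausdorff_dist (range (tup v)) (range (tup v)) < d v / 2"
      using dpos[OF v] by (intro hd_self fin) simp
    then show "v \<in> (\<Union>v\<in>C. H v)" using v unfolding H_def by blast
  qed
  obtain D where D: "D \<subseteq> C" "finite D" "C \<subseteq> (\<Union>v\<in>D. H v)"
    using compactE_image[OF cC opH cov] by metis
  define \<delta> where "\<delta> = Min (insert 1 ((\<lambda>v. d v / 2) ` D))"
  have dpos': "\<delta> > 0" unfolding \<delta>_def using D dpos by (auto simp: Min_gr_iff)
  have dle: "\<delta> \<le> d v / 2" if "v \<in> D" for v unfolding \<delta>_def using D that by (intro Min_le) auto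
  show ?thesis
  proof (intro exI[of _ \<delta>] conjI allI impI dpos')
    fix X X' :: "'n \<Rightarrow> real^'m" assume X: "in_cube_tuple a b X" and X': "in_cube_tuple a b X'"
      and h: "hausdorff_dist (range X) (range X') < \<delta>"
    define v0 where "v0 = (\<chi> i. X i)"
    have tv0: "tup v0 = X" unfolding tup_def v0_def by (simp add: vec_lambda_inverse)
    have "v0 \<in> C" using X unfolding C_def v0_def in_cube_tuple_def by simp
    then obtain v where v: "v \<in> D" "v0 \<in> H v" using D by blast
    have vC: "v \<in> C" using v D by blast
    have h1: "hausdorff_dist (range X) (range (tup v)) < d v / 2" using v(2) tv0 unfolding H_def by simp
    have h2: "hausdorff_dist (range X') (range X) < d v / 2" using h dle[OF v(1)] hd_sym by (metis less_le_trans)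
    have "hausdorff_dist (range (tup v)) (range X) < d v / 2" using h1 hd_sym by metis
    then have a1: "hausdorff_dist (range (tup v)) (range X) < d v" using dpos[OF vC] by simp
    have "hausdorff_dist (range X') (range (tup v)) < d v / 2 + d v / 2"
      using hd_tri[OF fin fin fin h2 h1] .
    then have a2: "hausdorff_dist (range (tup v)) (range X') < d v" using hd_sym by (metis field_sum_of_halves)
    have "\<bar>f (tup v) - f X\<bar> < e/2" using dprop[OF vC X a1] .
    moreover have "\<bar>f (tup v) - f X'\<bar> < e/2" using dprop[OF vC X' a2] .
    ultimately show "\<bar>f X - f X'\<bar> < e" by linarith
  qed
qed

theorem lemma1:
  fixes a b :: real and f :: "('n::finite \<Rightarrow> real^'m) \<Rightarrow> real"
  assumes "a < b"
    and "hausdorff_continuous a b f"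
    and "e > 0"
  shows "\<exists>K::nat. K > 0 \<and> (\<exists>(mu :: nat \<Rightarrow> real^'m) (S :: nat \<Rightarrow> real^'m^'m) (gamma :: real list \<Rightarrow> real).
           (\<forall>k<K. psd (S k)) \<and>
           (\<forall>X. in_cube_tuple a b X \<longrightarrow>
              \<bar>f X - gamma (map (\<lambda>k. Max (range (\<lambda>i. gauss_kernel (mu k) (S k) (X i)))) [0..<K])\<bar> < e))"
proof -
  obtain \<delta> where dpos: "\<delta> > 0" and dprop: "\<And>X X'. in_cube_tuple a b X \<Longrightarrow> in_cube_tuple a b X' \<Longrightarrow>
     hausdorff_dist (range X) (range X') < \<delta> \<Longrightarrow> \<bar>f X - f X'\<bar> < e"
    using unif[OF assms(2,3)] by blast
  define \<eta> where "\<eta> = \<delta> / 2"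
  have eta: "\<eta> > 0" unfolding \<eta>_def using dpos by simp
  define T where "T = {x::real^'m. \<forall>j. x$j \<in> {a..b}}"
  have "T = cbox (\<chi> j. a) (\<chi> j. b)" unfolding T_def by (auto simp: mem_box_cart)
  then have cT: "compact T" by simp
  have cov: "T \<subseteq> (\<Union>g\<in>T. ball g \<eta>)" using eta by force
  obtain G where G: "G \<subseteq> T" "finite G" "T \<subseteq> (\<Union>g\<in>G. ball g \<eta>)"
    using compactE_image[OF cT _ cov] by (metis open_ball)
  have "(\<chi> j. a) \<in> T" unfolding T_def using assms(1) by simp
  then have "G \<noteq> {}" using G by blast
  obtain gs where gs: "set gs = G" using G(2) finite_list by blast
  define K where "K = length gs"
  have Kpos: "K > 0" unfolding K_def using gs \<open>G \<noteq> {}\<close> by auto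
  define mu where "mu = (\<lambda>k. gs ! k)"
  define S :: "nat \<Rightarrow> real^'m^'m" where "S = (\<lambda>k. mat 1)"
  define Feat where "Feat X = map (\<lambda>k. Max (range (\<lambda>i. gauss_kernel (mu k) (S k) (X i)))) [0..<K]"
    for X :: "'n \<Rightarrow> real^'m"
  define gamma where "gamma v = f (SOME X. in_cube_tuple a b X \<and> Feat X = v)" for v
  have close: "\<exists>i'. dist (X i) (Y i') < \<delta>"
    if X: "in_cube_tuple a b X" and eq: "Feat X = Feat Y" for X Y :: "'n \<Rightarrow> real^'m" and i
  proof -
    have "X i \<in> T" using X unfolding T_def in_cube_tuple_def by blast
    then obtain g where g: "g \<in> G" "dist g (X i) < \<eta>" using G(3) by auto
    then obtain k where k: "k < K" "gs ! k = g" using gs unfolding K_def by (metis in_set_conv_nth)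
    have "Max (range (\<lambda>i. gauss_kernel (mu k) (S k) (X i))) = Max (range (\<lambda>i. gauss_kernel (mu k) (S k) (Y i)))"
      using arg_cong[OF eq, of "\<lambda>l. l ! k"] k unfolding Feat_def by simp
    moreover have "gauss_kernel (mu k) (S k) (X i) > exp (- (\<eta>^2))"
      unfolding S_def mu_def k using gk_gt[OF eta, of g "X i"] g(2) by (metis dist_commute)
    ultimately have "Max (range (\<lambda>i. gauss_kernel (mu k) (S k) (Y i))) > exp (- (\<eta>^2))"
      by (metis max_gt)
    then obtain i' where "gauss_kernel (mu k) (S k) (Y i') > exp (- (\<eta>^2))" using max_gt by metis
    then have "dist (Y i') g < \<eta>" unfolding S_def mu_def k using gk_gt[OF eta] by blast
    then have "dist (X i) (Y i') < \<eta> + \<eta>" using g dist_triangle[of "X i" "Y i'" g]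
      by (simp add: dist_commute)
    then show ?thesis unfolding \<eta>_def by auto
  qed
  show ?thesis
  proof (intro exI[of _ K] conjI Kpos exI[of _ mu] exI[of _ S] exI[of _ gamma])
    show "\<forall>k<K. psd (S k)" unfolding S_def by (auto intro: psd1)
    show "\<forall>X. in_cube_tuple a b X \<longrightarrow>
       \<bar>f X - gamma (map (\<lambda>k. Max (range (\<lambda>i. gauss_kernel (mu k) (S k) (X i)))) [0..<K])\<bar> < e"
    proof (intro allI impI)
    fix X :: "'n \<Rightarrow> real^'m" assume X: "in_cube_tuple a b X"
    define X0 where "X0 = (SOME X'. in_cube_tuple a b X' \<and> Feat X' = Feat X)"
    have "in_cube_tuple a b X0 \<and> Feat X0 = Feat X" unfolding X0_def using X by (metis (mono_tags, lifting) someI)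
    then have X0: "in_cube_tuple a b X0" "Feat X0 = Feat X" by auto
    have "hausdorff_dist (range X0) (range X) < \<delta>"
    proof (subst hd_lt, simp_all, intro conjI allI)
      fix i show "\<exists>y. dist (X0 i) (X y) < \<delta>" using close[OF X0] .
    next
      fix i obtain y where "dist (X i) (X0 y) < \<delta>" using close[OF X X0(2)[symmetric]] by blast
      then show "\<exists>x. dist (X0 x) (X i) < \<delta>" by (metis dist_commute)
    qed
    then have "\<bar>f X0 - f X\<bar> < e" using dprop X0 X by blast
    moreover have "gamma (Feat X) = f X0" unfolding gamma_def X0_def ..
    ultimately show "\<bar>f X - gamma (map (\<lambda>k. Max (range (\<lambda>i. gauss_kernel (mu k) (S k) (X i)))) [0..<K])\<bar> < e"
      unfolding Feat_def by (simp add: abs_minus_commute)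
  qed
  qed
qed

end
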